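(* There exist a constant $c>0$ and, for infinitely many $T$, a sequence of multiclass outcomes $\mathbf x\in[K]^T$ and forecasts $\mathbf p\in\Delta_K^T$ (with $K=3$) such that $\mathrm{Reg}_\ell(\mathbf p,\mathbf x)\le0$ for every bounded separable scoring rule $\ell$, but $\mathrm{MaxAgentReg}(\mathbf p,\mathbf x)\ge cT$.
   Context: $\Delta_K$ is the probability simplex in $\mathbb R^K$, outcome $i$ identified with $e_i$. A multiclass scoring rule is $\ell:\Delta_K\times[K]\to\mathbb R$; with $\ell(p;q)=\sum_iq_i\ell(p,i)$ it is proper if $\ell(p;p)\le\ell(p';p)$ for all $p,p'\in\Delta_K$, and bounded if its values lie in $[-1,1]$; $\mathcal L$ is the set of bounded proper multiclass scoring rules. A multiclass scoring rule is separable if $\ell(p,x)=\sum_{i=1}^K\ell_i(p_i,\mathbf 1(x=i))$ for some proper binary scoring rules $\ell_i:[0,1]\times\{0,1\}\to\mathbb R$ (binary properness: $(1-q)\ell_i(q,0)+q\ell_i(q,1)\le(1-q)\ell_i(q',0)+q\ell_i(q',1)$ for all $q,q'\in[0,1]$). With $\beta=\frac1T\sum_te_{x_t}$, $\mathrm{Reg}_\ell(\mathbf p,\mathbf x)=\sum_t\ell(p_t,x_t)-\sum_t\ell(\beta,x_t)$ and $\mathrm{MaxAgentReg}(\mathbf p,\mathbf x)=\sup_{\ell\in\mathcal L}\mathrm{Reg}_\ell(\mathbf p,\mathbf x)$. *)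

theory Defs
  imports Complex_Main
begin

text \<open>Outcomes [K] are 0..K-1; points of the simplex are functions nat => real,
  vanishing outside {..<K} (canonical representation).\<close>

definition simplex :: "nat \<Rightarrow> (nat \<Rightarrow> real) set" where
  "simplex K = {p. (\<forall>i<K. 0 \<le> p i) \<and> (\<forall>i\<ge>K. p i = 0) \<and> (\<Sum>i<K. p i) = 1}"

definition basis_vec :: "nat \<Rightarrow> nat \<Rightarrow> real" where
  "basis_vec i = (\<lambda>j. if j = i then 1 else 0)"

definition exp_loss :: "nat \<Rightarrow> ((nat \<Rightarrow> real) \<Rightarrow> nat \<Rightarrow> real) \<Rightarrow> (nat \<Rightarrow> real) \<Rightarrow> (nat \<Rightarrow> real) \<Rightarrow> real" where
  "exp_loss K l p q = (\<Sum>i<K. q i * l p i)"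

definition proper_rule :: "nat \<Rightarrow> ((nat \<Rightarrow> real) \<Rightarrow> nat \<Rightarrow> real) \<Rightarrow> bool" where
  "proper_rule K l \<longleftrightarrow> (\<forall>p\<in>simplex K. \<forall>p'\<in>simplex K. exp_loss K l p p \<le> exp_loss K l p' p)"

definition bounded_rule :: "nat \<Rightarrow> ((nat \<Rightarrow> real) \<Rightarrow> nat \<Rightarrow> real) \<Rightarrow> bool" where
  "bounded_rule K l \<longleftrightarrow> (\<forall>p\<in>simplex K. \<forall>i<K. -1 \<le> l p i \<and> l p i \<le> 1)"

definition bpsr :: "nat \<Rightarrow> ((nat \<Rightarrow> real) \<Rightarrow> nat \<Rightarrow> real) set" where
  "bpsr K = {l. proper_rule K l \<and> bounded_rule K l}"

text \<open>Binary scoring rule: l q b, with b = True meaning outcome 1.\<close>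
definition binary_proper :: "(real \<Rightarrow> bool \<Rightarrow> real) \<Rightarrow> bool" where
  "binary_proper lb \<longleftrightarrow> (\<forall>q\<in>{0..1}. \<forall>q'\<in>{0..1}.
     (1 - q) * lb q False + q * lb q True \<le> (1 - q) * lb q' False + q * lb q' True)"

definition separable_rule :: "nat \<Rightarrow> ((nat \<Rightarrow> real) \<Rightarrow> nat \<Rightarrow> real) \<Rightarrow> bool" where
  "separable_rule K l \<longleftrightarrow> (\<exists>ls :: nat \<Rightarrow> real \<Rightarrow> bool \<Rightarrow> real.
     (\<forall>i<K. binary_proper (ls i)) \<and>
     (\<forall>p\<in>simplex K. \<forall>x<K. l p x = (\<Sum>i<K. ls i (p i) (x = i))))"

definition empirical :: "nat \<Rightarrow> (nat \<Rightarrow> nat) \<Rightarrow> nat \<Rightarrow> real" where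
  "empirical T x = (\<lambda>i. (\<Sum>t<T. basis_vec (x t) i) / real T)"

definition Reg :: "((nat \<Rightarrow> real) \<Rightarrow> nat \<Rightarrow> real) \<Rightarrow> nat \<Rightarrow> (nat \<Rightarrow> nat \<Rightarrow> real) \<Rightarrow> (nat \<Rightarrow> nat) \<Rightarrow> real" where
  "Reg l T p x = (\<Sum>t<T. l (p t) (x t)) - (\<Sum>t<T. l (empirical T x) (x t))"

definition MaxAgentReg :: "nat \<Rightarrow> nat \<Rightarrow> (nat \<Rightarrow> nat \<Rightarrow> real) \<Rightarrow> (nat \<Rightarrow> nat) \<Rightarrow> real" where
  "MaxAgentReg K T p x = (SUP l\<in>bpsr K. Reg l T p x)"

end

theory Submission
  imports Defs
begin

definition PP :: "nat \<Rightarrow> nat \<Rightarrow> real" where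
  "PP r = (\<lambda>j. if j < 3 \<and> j \<noteq> 2 - r then 1/2 else 0)"

definition XX :: "nat \<Rightarrow> nat" where
  "XX r = (if r = 0 then 0 else if r = 1 then 2 else 1)"

definition bet :: "nat \<Rightarrow> real" where
  "bet = (\<lambda>i. if i < 3 then 1/3 else 0)"

definition acts :: "nat \<Rightarrow> nat \<Rightarrow> real" where
  "acts k i = (if k = 1 then (if i = 0 then 1/2 else if i = 1 then -1 else 1)
     else if k = 2 then (if i = 0 then -1 else if i = 1 then 1 else 1/2)
     else if k = 3 then (if i = 0 then 1 else if i = 1 then 1/2 else -1)
     else 0)"

definition vv :: "(nat \<Rightarrow> real) \<Rightarrow> nat \<Rightarrow> real" where
  "vv q k = (\<Sum>i<3. q i * acts k i)"

definition kstar :: "(nat \<Rightarrow> real) \<Rightarrow> nat" where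
  "kstar p = (LEAST k. k < 4 \<and> (\<forall>j<4. vv p k \<le> vv p j))"

definition lrule :: "(nat \<Rightarrow> real) \<Rightarrow> nat \<Rightarrow> real" where
  "lrule p i = acts (kstar p) i"

lemma three: "{..<3::nat} = {0,1,2}" by auto
lemma four: "{..<4::nat} = {0,1,2,3}" by auto

lemma kstar_ex: "\<exists>k. k < 4 \<and> (\<forall>j<4. vv p k \<le> vv p j)"
proof -
  let ?S = "vv p ` {..<4}"
  have "finite ?S" "?S \<noteq> {}" by (auto simp: four)
  then have "Min ?S \<in> ?S" by (rule Min_in)
  then obtain k where k: "k < 4" "vv p k = Min ?S" by auto
  have "\<forall>j<4. vv p k \<le> vv p j" using k by (simp add: Min_le)
  with k show ?thesis by blast
qed

lemma kstar_prop: "kstar p < 4 \<and> (\<forall>j<4. vv p (kstar p) \<le> vv p j)"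
  unfolding kstar_def using LeastI_ex[OF kstar_ex] .

lemma acts_bd: "-1 \<le> acts k i \<and> acts k i \<le> 1"
  unfolding acts_def by auto

lemma lrule_bpsr: "lrule \<in> bpsr 3"
proof -
  have "proper_rule 3 lrule"
    unfolding proper_rule_def exp_loss_def lrule_def
  proof (intro ballI)
    fix p p' :: "nat \<Rightarrow> real"
    have "vv p (kstar p) \<le> vv p (kstar p')" using kstar_prop[of p] kstar_prop[of p'] by blast
    then show "(\<Sum>i<3. p i * acts (kstar p) i) \<le> (\<Sum>i<3. p i * acts (kstar p') i)"
      by (simp add: vv_def)
  qed
  moreover have "bounded_rule 3 lrule"
    unfolding bounded_rule_def lrule_def using acts_bd by auto
  ultimately show ?thesis unfolding bpsr_def by auto
qed

lemma kstar_eq: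
  assumes "\<forall>j<4. j \<noteq> k \<longrightarrow> vv p k < vv p j" "k < 4"
  shows "kstar p = k"
proof -
  have "k = kstar p"
  proof (rule ccontr)
    assume ne: "k \<noteq> kstar p"
    have "vv p (kstar p) \<le> vv p k" using kstar_prop[of p] assms(2) by blast
    moreover have "vv p k < vv p (kstar p)" using assms(1) kstar_prop[of p] ne by auto
    ultimately show False by simp
  qed
  then show ?thesis by simp
qed

lemma k0: "kstar (PP 0) = 1"
  by (rule kstar_eq) (auto simp: vv_def PP_def acts_def three four less_Suc_eq numeral_eq_Suc)
lemma k1: "kstar (PP 1) = 2"
  by (rule kstar_eq) (auto simp: vv_def PP_def acts_def three four less_Suc_eq numeral_eq_Suc)
lemma k2: "kstar (PP 2) = 3"
  by (rule kstar_eq) (auto simp: vv_def PP_def acts_def three four less_Suc_eq numeral_eq_Suc)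
lemma kb: "kstar bet = 0"
  by (rule kstar_eq) (auto simp: vv_def bet_def acts_def three four less_Suc_eq numeral_eq_Suc)

lemma sum_mod3: "(\<Sum>t<3*n. (g (t mod 3) :: real)) = real n * (g 0 + g 1 + g 2)"
proof (induction n)
  case 0 then show ?case by simp
next
  case (Suc n)
  have e: "3 * Suc n = Suc (Suc (Suc (3*n)))" by simp
  have m0: "(3*n) mod 3 = 0" by simp
  have m1: "Suc (3*n) mod 3 = 1" by presburger
  have m2: "Suc (Suc (3*n)) mod 3 = 2" by presburger
  have "(\<Sum>t<3 * Suc n. g (t mod 3)) = (\<Sum>t<3*n. g (t mod 3)) + g 0 + g 1 + g 2"
    unfolding e by (simp only: sum.lessThan_Suc m0 m1 m2)
  then show ?case using Suc by (simp add: algebra_simps)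
qed

lemma PP_simplex: "r < 3 \<Longrightarrow> PP r \<in> simplex 3"
  unfolding simplex_def PP_def by (auto simp: three less_Suc_eq numeral_eq_Suc)

lemma bet_simplex: "bet \<in> simplex 3"
  unfolding simplex_def bet_def by (auto simp: three)

lemma emp: "n > 0 \<Longrightarrow> empirical (3*n) (\<lambda>t. XX (t mod 3)) = bet"
proof
  fix i assume n: "n > 0"
  have "(\<Sum>t<3*n. basis_vec (XX (t mod 3)) i) = real n * (basis_vec (XX 0) i + basis_vec (XX 1) i + basis_vec (XX 2) i)"
    by (rule sum_mod3)
  also have "\<dots> = real n * (if i < 3 then 1 else 0)"
    by (auto simp: basis_vec_def XX_def)
  finally show "empirical (3*n) (\<lambda>t. XX (t mod 3)) i = bet i"
    using n by (simp add: empirical_def bet_def)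
qed

lemma Reg_eq: "n > 0 \<Longrightarrow> Reg l (3*n) (\<lambda>t. PP (t mod 3)) (\<lambda>t. XX (t mod 3)) =
   real n * (l (PP 0) (XX 0) + l (PP 1) (XX 1) + l (PP 2) (XX 2)) - real n * (l bet (XX 0) + l bet (XX 1) + l bet (XX 2))"
  unfolding Reg_def emp
  using sum_mod3[where n=n and g="\<lambda>r. l (PP r) (XX r)"] sum_mod3[where n=n and g="\<lambda>r. l bet (XX r)"] by simp

lemma binprop:
  assumes "binary_proper f"
  shows "f (1/2) True + f (1/2) False + f 0 False \<le> f (1/3) True + f (1/3) False + f (1/3) False"
proof -
  have h: "\<And>q q'. q \<in> {0..1} \<Longrightarrow> q' \<in> {0..1} \<Longrightarrow>
     (1 - q) * f q False + q * f q True \<le> (1 - q) * f q' False + q * f q' True"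
    using assms unfolding binary_proper_def by blast
  have a: "(1 - 1/2) * f (1/2) False + 1/2 * f (1/2) True \<le> (1 - 1/2) * f (1/3) False + 1/2 * f (1/3) True"
    by (rule h) auto
  have b: "(1 - 0) * f 0 False + 0 * f 0 True \<le> (1 - 0) * f (1/3) False + 0 * f (1/3) True"
    by (rule h) auto
  from a b show ?thesis by simp
qed

lemma main:
  assumes n: "n > 0"
  shows "\<exists>(p :: nat \<Rightarrow> nat \<Rightarrow> real) (x :: nat \<Rightarrow> nat).
           (\<forall>t<3*n. p t \<in> simplex 3 \<and> x t < 3) \<and>
           (\<forall>l. bounded_rule 3 l \<and> separable_rule 3 l \<longrightarrow> Reg l (3*n) p x \<le> 0) \<and>
           MaxAgentReg 3 (3*n) p x \<ge> 1/2 * real (3*n)"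
proof -
  have A1: "\<forall>t<3*n. PP (t mod 3) \<in> simplex 3 \<and> XX (t mod 3) < 3"
    by (auto simp: PP_simplex XX_def)
  have A2: "Reg l (3*n) (\<lambda>t. PP (t mod 3)) (\<lambda>t. XX (t mod 3)) \<le> 0"
    if "bounded_rule 3 l \<and> separable_rule 3 l" for l
  proof -
  from that obtain ls where ls: "\<forall>i<3. binary_proper (ls i)"
     "\<forall>p\<in>simplex 3. \<forall>x<3. l p x = (\<Sum>i<3. ls i (p i) (x = i))"
    unfolding separable_rule_def by blast
  have s: "\<And>r. r < 3 \<Longrightarrow> l (PP r) (XX r) = (\<Sum>i<3. ls i (PP r i) (XX r = i))"
    using ls(2) PP_simplex by (auto simp: XX_def)
  have sb: "\<And>r. r < 3 \<Longrightarrow> l bet (XX r) = (\<Sum>i<3. ls i (bet i) (XX r = i))"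
    using ls(2) bet_simplex by (auto simp: XX_def)
  note b0 = binprop[OF ls(1)[rule_format, of 0]]
  note b1 = binprop[OF ls(1)[rule_format, of 1]]
  note b2 = binprop[OF ls(1)[rule_format, of 2]]
  have "l (PP 0) (XX 0) + l (PP 1) (XX 1) + l (PP 2) (XX 2) \<le> l bet (XX 0) + l bet (XX 1) + l bet (XX 2)"
  proof -
    have e0: "l (PP 0) (XX 0) = ls 0 (1/2) True + ls 1 (1/2) False + ls 2 0 False"
      using s[of 0] by (simp add: three PP_def XX_def)
    have e1: "l (PP 1) (XX 1) = ls 0 (1/2) False + ls 1 0 False + ls 2 (1/2) True"
      using s[of 1] by (simp add: three PP_def XX_def)
    have e2: "l (PP 2) (XX 2) = ls 0 0 False + ls 1 (1/2) True + ls 2 (1/2) False"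
      using s[of 2] by (simp add: three PP_def XX_def)
    have f0: "l bet (XX 0) = ls 0 (1/3) True + ls 1 (1/3) False + ls 2 (1/3) False"
      using sb[of 0] by (simp add: three bet_def XX_def)
    have f1: "l bet (XX 1) = ls 0 (1/3) False + ls 1 (1/3) False + ls 2 (1/3) True"
      using sb[of 1] by (simp add: three bet_def XX_def)
    have f2: "l bet (XX 2) = ls 0 (1/3) False + ls 1 (1/3) True + ls 2 (1/3) False"
      using sb[of 2] by (simp add: three bet_def XX_def)
    show ?thesis unfolding e0 e1 e2 f0 f1 f2 using b0 b1 b2 by linarith
  qed
  then have "real n * (l (PP 0) (XX 0) + l (PP 1) (XX 1) + l (PP 2) (XX 2)) \<le> real n * (l bet (XX 0) + l bet (XX 1) + l bet (XX 2))"
    by (rule mult_left_mono) simp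
  then show "Reg l (3*n) (\<lambda>t. PP (t mod 3)) (\<lambda>t. XX (t mod 3)) \<le> 0"
    unfolding Reg_eq[OF n] by linarith
  qed
  let ?p = "\<lambda>t. PP (t mod 3)" and ?x = "\<lambda>t. XX (t mod 3)"
  have r: "Reg lrule (3*n) ?p ?x = 3/2 * real n"
    unfolding Reg_eq[OF n] by (simp add: lrule_def k0 k1 k1[simplified] k2 kb XX_def acts_def)
  have bdd: "bdd_above ((\<lambda>l. Reg l (3*n) ?p ?x) ` bpsr 3)"
  proof (rule bdd_aboveI2)
    fix l assume "l \<in> bpsr 3"
    then have bl: "bounded_rule 3 l" by (simp add: bpsr_def)
    have "\<And>r. r < 3 \<Longrightarrow> l (PP r) (XX r) \<le> 1" using bl PP_simplex
      unfolding bounded_rule_def by (auto simp: XX_def)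
    moreover have "\<And>r. r < 3 \<Longrightarrow> -1 \<le> l bet (XX r)" using bl bet_simplex
      unfolding bounded_rule_def by (auto simp: XX_def)
    ultimately have u: "l (PP 0) (XX 0) \<le> 1" "l (PP 1) (XX 1) \<le> 1" "l (PP 2) (XX 2) \<le> 1"
      "-1 \<le> l bet (XX 0)" "-1 \<le> l bet (XX 1)" "-1 \<le> l bet (XX 2)" by auto
    then have "l (PP 0) (XX 0) + l (PP 1) (XX 1) + l (PP 2) (XX 2) - (l bet (XX 0) + l bet (XX 1) + l bet (XX 2)) \<le> 6"
      by linarith
    then have "real n * (l (PP 0) (XX 0) + l (PP 1) (XX 1) + l (PP 2) (XX 2) - (l bet (XX 0) + l bet (XX 1) + l bet (XX 2))) \<le> real n * 6"
      by (rule mult_left_mono) simp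
    then show "Reg l (3*n) ?p ?x \<le> 6 * real n"
      using n by (simp add: Reg_eq right_diff_distrib)
  qed
  have "Reg lrule (3*n) ?p ?x \<le> MaxAgentReg 3 (3*n) ?p ?x"
    unfolding MaxAgentReg_def by (rule cSUP_upper[OF lrule_bpsr bdd])
  then have A3: "1/2 * real (3*n) \<le> MaxAgentReg 3 (3*n) ?p ?x" using r by simp
  show ?thesis
    apply (rule exI[where x = ?p], rule exI[where x = ?x])
    using A1 A2 A3 by auto
qed

theorem corollary5p6:
  shows "\<exists>c::real. c > 0 \<and> infinite {T::nat. \<exists>(p :: nat \<Rightarrow> nat \<Rightarrow> real) (x :: nat \<Rightarrow> nat).
           (\<forall>t<T. p t \<in> simplex 3 \<and> x t < 3) \<and>
           (\<forall>l. bounded_rule 3 l \<and> separable_rule 3 l \<longrightarrow> Reg l T p x \<le> 0) \<and>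
           MaxAgentReg 3 T p x \<ge> c * real T}"
proof -
  define S where "S = {T::nat. \<exists>(p :: nat \<Rightarrow> nat \<Rightarrow> real) (x :: nat \<Rightarrow> nat).
           (\<forall>t<T. p t \<in> simplex 3 \<and> x t < 3) \<and>
           (\<forall>l. bounded_rule 3 l \<and> separable_rule 3 l \<longrightarrow> Reg l T p x \<le> 0) \<and>
           MaxAgentReg 3 T p x \<ge> 1/2 * real T}"
  have mem: "3 * Suc m \<in> S" for m
    unfolding S_def mem_Collect_eq by (rule main) simp
  have "infinite S"
  proof
    assume "finite S"
    then obtain b where b: "\<forall>T\<in>S. T < b" unfolding finite_nat_set_iff_bounded by blast
    have "3 * Suc b < b" using b mem[of b] by blast
    then show False by simp
  qed
  then show ?thesis unfolding S_def by (intro exI[where x = "1/2"] conjI) simp_all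
qed

end
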